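(* Let $\varrho,\widetilde{\varrho}:\mathbb{R}\to\mathbb{R}$ with $\varrho$ continuous, let $d\in\mathbb{N}^+$, $a<b$, $f:[a,b]^d\to\mathbb{R}$, and $\varepsilon>0$. Suppose (i) there is a function $\phi_\varrho$ generated by a $\varrho$-activated network with width $N$ and depth $L$ such that $|\phi_\varrho(\boldsymbol{x})-f(\boldsymbol{x})|<\varepsilon/2$ for all $\boldsymbol{x}\in[a,b]^d$; and (ii) for every $M>0$ and each $\delta\in(0,1)$ there exists a function $\varrho_\delta$ generated by a $\widetilde{\varrho}$-activated network with width $\widetilde{N}$ and depth $\widetilde{L}$ such that $\varrho_\delta\to\varrho$ uniformly on $[-M,M]$ as $\delta\to0^+$. Then there exists a function $\phi$ generated by a $\widetilde{\varrho}$-activated network with width $N\widetilde{N}$ and depth $L\widetilde{L}$ such that $|\phi(\boldsymbol{x})-f(\boldsymbol{x})|<\varepsilon$ for all $\boldsymbol{x}\in[a,b]^d$.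
   Context: For an activation $\eta:\mathbb{R}\to\mathbb{R}$ (applied to vectors entrywise), a function generated by an $\eta$-activated network with input dimension $n$, width $N$ and depth $L$ is a function of the form $\mathcal{L}_{\ell}\circ\eta\circ\mathcal{L}_{\ell-1}\circ\cdots\circ\eta\circ\mathcal{L}_0$ with $\ell\le L$ hidden layers, where the $\mathcal{L}_i$ are affine maps, $\mathcal{L}_0$ has domain $\mathbb{R}^n$, $\mathcal{L}_\ell$ has codomain $\mathbb{R}$, and every hidden layer has at most $N$ neurons. *)

theory Defs
  imports "HOL-Analysis.Analysis"
begin

text \<open>Vectors of dimension m are represented as functions nat => real; only the
entries with index < m are meaningful (the others are kept at 0).\<close>

definition aff :: "nat \<Rightarrow> nat \<Rightarrow> (nat \<Rightarrow> nat \<Rightarrow> real) \<Rightarrow> (nat \<Rightarrow> real) \<Rightarrow> (nat \<Rightarrow> real) \<Rightarrow> (nat \<Rightarrow> real)" where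
  "aff m k W c x = (\<lambda>i. if i < k then (\<Sum>j<m. W i j * x j) + c i else 0)"

definition act :: "(real \<Rightarrow> real) \<Rightarrow> nat \<Rightarrow> (nat \<Rightarrow> real) \<Rightarrow> (nat \<Rightarrow> real)" where
  "act \<eta> k x = (\<lambda>i. if i < k then \<eta> (x i) else 0)"

fun run :: "(real \<Rightarrow> real) \<Rightarrow> nat list \<Rightarrow> ((nat \<Rightarrow> nat \<Rightarrow> real) \<times> (nat \<Rightarrow> real)) list
             \<Rightarrow> (nat \<Rightarrow> real) \<Rightarrow> (nat \<Rightarrow> real)" where
  "run \<eta> (m # k # ds) ((W, c) # ps) x =
     (if ds = [] then aff m k W c x else run \<eta> (k # ds) ps (act \<eta> k (aff m k W c x)))"
| "run \<eta> _ _ x = x"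

text \<open>g is generated by an eta-activated network with input dimension n,
width N and depth L: at most L hidden layers, each with at most N neurons.\<close>
definition nn_fun :: "(real \<Rightarrow> real) \<Rightarrow> nat \<Rightarrow> nat \<Rightarrow> nat \<Rightarrow> ((nat \<Rightarrow> real) \<Rightarrow> real) \<Rightarrow> bool" where
  "nn_fun \<eta> n N L g \<longleftrightarrow>
     (\<exists>hs ps. length hs \<le> L \<and> (\<forall>h\<in>set hs. h \<le> N) \<and> length ps = length hs + 1 \<and>
        (\<forall>x. g x = run \<eta> (n # hs @ [1]) ps x 0))"

definition cube :: "nat \<Rightarrow> real \<Rightarrow> real \<Rightarrow> (nat \<Rightarrow> real) set" where
  "cube d a b = {x. (\<forall>i<d. a \<le> x i \<and> x i \<le> b) \<and> (\<forall>i\<ge>d. x i = 0)}"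

end

theory Submission imports Defs begin

inductive net :: "(real\<Rightarrow>real) \<Rightarrow> nat \<Rightarrow> nat \<Rightarrow> nat \<Rightarrow> nat \<Rightarrow> ((nat\<Rightarrow>real)\<Rightarrow>(nat\<Rightarrow>real)) \<Rightarrow> bool"
  for \<eta> where
  base: "net \<eta> m n D W (aff m n A c)"
| step: "net \<eta> k n D W G \<Longrightarrow> k \<le> W \<Longrightarrow> net \<eta> m n (Suc D) W (G \<circ> act \<eta> k \<circ> aff m k A c)"

lemma net_mono: "net \<eta> m n D W F \<Longrightarrow> D \<le> D' \<Longrightarrow> W \<le> W' \<Longrightarrow> net \<eta> m n D' W' F"
proof (induction arbitrary: D' rule: net.induct)
  case (base m n D W A c)
  show ?case by (rule net.base)
next
  case (step k n D W G m A c)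
  then obtain D'' where "D' = Suc D''" "D \<le> D''" by (cases D') auto
  then show ?case by (simp only:) (rule net.step, use step in auto)
qed

lemma aff_comp: "aff k n B e (aff m k A c x) =
   aff m n (\<lambda>i j. \<Sum>l<k. B i l * A l j) (\<lambda>i. (\<Sum>l<k. B i l * c l) + e i) x"
proof -
  have "(\<Sum>l<k. B i l * ((\<Sum>j<m. A l j * x j) + c l)) =
        (\<Sum>j<m. (\<Sum>l<k. B i l * A l j) * x j) + (\<Sum>l<k. B i l * c l)" for i
    by (simp add: distrib_left sum.distrib sum_distrib_left sum_distrib_right sum.swap[of _ "{..<k}"] mult.assoc)
  then show ?thesis unfolding aff_def by (auto intro!: ext sum.cong)
qed

lemma aff_comp': "aff k n B e \<circ> aff m k A c =
   aff m n (\<lambda>i j. \<Sum>l<k. B i l * A l j) (\<lambda>i. (\<Sum>l<k. B i l * c l) + e i)"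
  using aff_comp by (auto intro!: ext)

lemma net_precomp: assumes "net \<eta> k n D W G" shows "net \<eta> m n D W (G \<circ> aff m k A c)"
  using assms
proof (cases rule: net.cases)
  case (base B e)
  then show ?thesis by (simp add: aff_comp' net.base)
next
  case (step k' D' G' B e)
  have "net \<eta> m n (Suc D') W (G' \<circ> act \<eta> k' \<circ> (aff k k' B e \<circ> aff m k A c))"
    unfolding aff_comp' by (rule net.step) (use step in auto)
  then show ?thesis using step by (simp add: o_def)
qed

lemma net_comp: "net \<eta> m k D1 W F \<Longrightarrow> net \<eta> k n D2 W G \<Longrightarrow> net \<eta> m n (D1 + D2) W (G \<circ> F)"
proof (induction rule: net.induct)
  case base
  then show ?case using net_precomp net_mono by (metis le_add2 order_refl)
next
  case (step k' k D W F m A c)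
  have "net \<eta> k' n (D + D2) W (G \<circ> F)" by (rule step.IH[OF step.prems])
  then have "net \<eta> m n (Suc (D + D2)) W ((G \<circ> F) \<circ> act \<eta> k' \<circ> aff m k' A c)"
    by (rule net.step) (use step in auto)
  then show ?case by (simp add: o_def)
qed

lemma net_local: "net \<eta> m n D W F \<Longrightarrow> (\<forall>j<m. x j = x' j) \<Longrightarrow> F x = F x'"
proof (induction rule: net.induct)
  case (base m n D W A c)
  then show ?case unfolding aff_def by (auto intro!: ext sum.cong)
next
  case (step k n D W G m A c)
  have "aff m k A c x = aff m k A c x'" using step.prems unfolding aff_def by (auto intro!: ext sum.cong)
  then show ?case by simp
qed

definition par :: "nat \<Rightarrow> nat \<Rightarrow> nat \<Rightarrow> ((nat\<Rightarrow>real)\<Rightarrow>(nat\<Rightarrow>real)) \<Rightarrow> (nat\<Rightarrow>real)\<Rightarrow>(nat\<Rightarrow>real)" where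
  "par k m n F y = (\<lambda>i. if i < k*n then F (\<lambda>j. if j < m then y (i mod k + k*j) else 0) (i div k) else 0)"

lemma sum_stride:
  assumes "p < (k::nat)"
  shows "(\<Sum>i<k*m. if i mod k = p then f i else 0) = (\<Sum>j<m. f (p + k*j))"
proof -
  have "(\<Sum>i<k*m. if i mod k = p then f i else 0) = sum f {i\<in>{..<k*m}. i mod k = p}"
    by (rule sum.inter_filter[symmetric]) simp
  also have "{i\<in>{..<k*m}. i mod k = p} = (\<lambda>j. p + k*j) ` {..<m}"
  proof (intro equalityI subsetI)
    fix i assume "i \<in> {i\<in>{..<k*m}. i mod k = p}"
    then have i: "i < k*m" "i mod k = p" by auto
    have "i = p + k * (i div k)" using i(2) by (metis div_mult_mod_eq add.commute mult.commute)
    moreover have "i div k < m" using i(1) by (metis div_less_iff_less_mult mult.commute assms gr_zeroI not_less0 less_nat_zero_code)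
    ultimately show "i \<in> (\<lambda>j. p + k*j) ` {..<m}" by blast
  next
    fix i assume "i \<in> (\<lambda>j. p + k*j) ` {..<m}"
    then obtain j where j: "j < m" "i = p + k*j" by auto
    have "p + k*j < k + k*j" using assms by simp
    also have "\<dots> = k * (j+1)" by simp
    also have "\<dots> \<le> k*m" using j by (intro mult_le_mono2) auto
    finally show "i \<in> {i\<in>{..<k*m}. i mod k = p}" using j assms by auto
  qed
  also have "sum f \<dots> = (\<Sum>j<m. f (p + k*j))"
    using assms by (subst sum.reindex) (auto simp: inj_on_def)
  finally show ?thesis .
qed

lemma par_aff: "par k m n (aff m n A c) =
   aff (k*m) (k*n) (\<lambda>i i'. if i' mod k = i mod k then A (i div k) (i' div k) else 0) (\<lambda>i. c (i div k))"
proof (intro ext)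
  fix y i
  show "par k m n (aff m n A c) y i = aff (k*m) (k*n) (\<lambda>i i'. if i' mod k = i mod k then A (i div k) (i' div k) else 0) (\<lambda>i. c (i div k)) y i"
  proof (cases "i < k*n")
    case True
    then have k: "k > 0" by (cases k) auto
    have id: "i div k < n" using True by (metis div_less_iff_less_mult mult.commute k)
    have "(\<Sum>i'<k*m. (if i' mod k = i mod k then A (i div k) (i' div k) else 0) * y i')
       = (\<Sum>i'<k*m. if i' mod k = i mod k then A (i div k) (i' div k) * y i' else 0)"
      by (intro sum.cong) auto
    also have "\<dots> = (\<Sum>j<m. A (i div k) ((i mod k + k*j) div k) * y (i mod k + k*j))"
      using k by (intro sum_stride) auto
    also have "\<dots> = (\<Sum>j<m. A (i div k) j * y (i mod k + k*j))"
      using k by (intro sum.cong) auto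
    finally show ?thesis using True id unfolding par_def aff_def by simp
  next
    case False
    then show ?thesis unfolding par_def aff_def by simp
  qed
qed

lemma par_step:
  assumes G: "net \<eta> w n D W G"
  shows "par k m n (G \<circ> act \<eta> w \<circ> aff m w A c) = par k w n G \<circ> act \<eta> (k*w) \<circ> par k m w (aff m w A c)"
proof (intro ext)
  fix y i
  show "par k m n (G \<circ> act \<eta> w \<circ> aff m w A c) y i = (par k w n G \<circ> act \<eta> (k*w) \<circ> par k m w (aff m w A c)) y i"
  proof (cases "i < k*n")
    case True
    then have k: "k > 0" by (cases k) auto
    define p where "p = i mod k"
    have p: "p < k" using k p_def by simp
    have lt: "p + k*j < k*w" if "j < w" for j
    proof -
      have "p + k*j < k + k*j" using p by simp
      also have "\<dots> = k * (j+1)" by simp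
      also have "\<dots> \<le> k*w" using that by (intro mult_le_mono2) auto
      finally show ?thesis .
    qed
    have "G (act \<eta> w (aff m w A c (\<lambda>j. if j < m then y (p + k*j) else 0))) =
          G (\<lambda>j. if j < w then act \<eta> (k*w) (par k m w (aff m w A c) y) (p + k*j) else 0)"
    proof (rule net_local[OF G], intro allI impI)
      fix j assume j: "j < w"
      have pk: "(p + k*j) mod k = p" "(p + k*j) div k = j" using p by auto
      show "act \<eta> w (aff m w A c (\<lambda>j. if j < m then y (p + k*j) else 0)) j =
          (if j < w then act \<eta> (k*w) (par k m w (aff m w A c) y) (p + k*j) else 0)"
        using j lt[OF j] unfolding act_def par_def apply (simp add: pk p) apply (simp only: pk(1))
        done
    qed
    then show ?thesis using True unfolding par_def[of k w n G] par_def[of k m n] p_def by simp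
  next
    case False
    then show ?thesis unfolding par_def by simp
  qed
qed

lemma net_par: "net \<eta> m n D W F \<Longrightarrow> net \<eta> (k*m) (k*n) D (k*W) (par k m n F)"
proof (induction rule: net.induct)
  case (base m n D W A c)
  then show ?case by (simp add: par_aff net.base)
next
  case (step w n D W G m A c)
  have "net \<eta> (k*m) (k*n) (Suc D) (k*W) (par k w n G \<circ> act \<eta> (k*w) \<circ> par k m w (aff m w A c))"
    unfolding par_aff by (rule net.step) (use step in auto)
  then show ?case by (simp only: par_step[OF step.hyps(1)])
qed

lemma act_par: "(\<And>t. \<sigma> t = Fg (\<lambda>i. if i = 0 then t else 0) 0) \<Longrightarrow> act \<sigma> k = par k 1 1 Fg"
proof (intro ext)
  fix x i
  assume s: "\<And>t. \<sigma> t = Fg (\<lambda>i. if i = 0 then t else 0) 0"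
  show "act \<sigma> k x i = par k 1 1 Fg x i"
  proof (cases "i < k")
    case True
    then have "(\<lambda>j. if j < 1 then x (i mod k + k*j) else 0) = (\<lambda>j. if j = 0 then x i else 0)"
      by (auto intro!: ext)
    then show ?thesis using True s unfolding act_def par_def by simp
  qed (simp add: act_def par_def)
qed

lemma net_replace:
  assumes "net \<sigma> m n D N F" "\<And>k. net \<rho>t k k Lt (k*Nt) (act \<sigma> k)"
  shows "net \<rho>t m n (D*Lt) (N*Nt) F"
  using assms(1)
proof (induction rule: net.induct)
  case (base m n D W A c)
  then show ?case by (rule net.base)
next
  case (step k n D W G m A c)
  have "net \<rho>t k k Lt (W*Nt) (act \<sigma> k)" by (rule net_mono[OF assms(2)[of k]]) (use step in auto)
  from net_comp[OF this step.IH] have "net \<rho>t m n (Lt + D*Lt) (W*Nt) ((G \<circ> act \<sigma> k) \<circ> aff m k A c)"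
    by (rule net_precomp)
  then show ?case by (simp add: o_def)
qed

lemma net_run: "length ps = length hs + 1 \<Longrightarrow> (\<forall>h\<in>set hs. h \<le> W) \<Longrightarrow>
   net \<eta> m n (length hs) W (run \<eta> (m # hs @ [n]) ps)"
proof (induction hs arbitrary: m ps)
  case Nil
  then obtain A c where "ps = [(A,c)]" by (cases ps) (auto simp: length_Suc_conv)
  moreover have "run \<eta> [m,n] [(A,c)] = aff m n A c" by (auto intro!: ext)
  ultimately show ?case using net.base by simp
next
  case (Cons h hs)
  then obtain A c ps' where ps: "ps = (A,c) # ps'" "length ps' = length hs + 1" by (cases ps) auto
  have "net \<eta> m n (Suc (length hs)) W (run \<eta> (h # hs @ [n]) ps' \<circ> act \<eta> h \<circ> aff m h A c)"
    using Cons ps by (intro net.step) auto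
  moreover have "run \<eta> (h # hs @ [n]) ps' \<circ> act \<eta> h \<circ> aff m h A c = run \<eta> (m # (h # hs) @ [n]) ps"
    using ps by (auto intro!: ext)
  ultimately show ?case by simp
qed

lemma run_net: "net \<eta> m n D W F \<Longrightarrow> \<exists>hs ps. length hs \<le> D \<and> (\<forall>h\<in>set hs. h \<le> W) \<and>
   length ps = length hs + 1 \<and> F = run \<eta> (m # hs @ [n]) ps"
proof (induction rule: net.induct)
  case (base m n D W A c)
  show ?case by (rule exI[of _ "[]"], rule exI[of _ "[(A,c)]"]) (auto intro!: ext)
next
  case (step k n D W G m A c)
  then obtain hs ps where h: "length hs \<le> D" "\<forall>h\<in>set hs. h \<le> W" "length ps = length hs + 1"
    "G = run \<eta> (k # hs @ [n]) ps" by blast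
  show ?case
    by (rule exI[of _ "k # hs"], rule exI[of _ "(A,c) # ps"]) (use h step in \<open>auto intro!: ext\<close>)
qed


definition Anorm :: "nat \<Rightarrow> nat \<Rightarrow> (nat \<Rightarrow> nat \<Rightarrow> real) \<Rightarrow> (nat \<Rightarrow> real) \<Rightarrow> real" where
  "Anorm m k W c = 1 + (\<Sum>i<k. \<Sum>j<m. \<bar>W i j\<bar>) + (\<Sum>i<k. \<bar>c i\<bar>)"

lemma Anorm_ge1: "Anorm m k W c \<ge> 1"
  unfolding Anorm_def by (simp add: sum_nonneg add_nonneg_nonneg)

lemma Anorm_row: "i < k \<Longrightarrow> (\<Sum>j<m. \<bar>W i j\<bar>) \<le> Anorm m k W c"
proof -
  assume i: "i < k"
  have "(\<Sum>j<m. \<bar>W i j\<bar>) \<le> (\<Sum>i<k. \<Sum>j<m. \<bar>W i j\<bar>)"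
    using i by (intro member_le_sum) (auto intro: sum_nonneg)
  moreover have "0 \<le> (\<Sum>i<k. \<bar>c i\<bar>)" by (simp add: sum_nonneg)
  ultimately show ?thesis unfolding Anorm_def by linarith
qed

lemma Anorm_c: "i < k \<Longrightarrow> \<bar>c i\<bar> \<le> Anorm m k W c"
proof -
  assume i: "i < k"
  have "\<bar>c i\<bar> \<le> (\<Sum>i<k. \<bar>c i\<bar>)"
    using i by (intro member_le_sum) auto
  moreover have "0 \<le> (\<Sum>i<k. \<Sum>j<m. \<bar>W i j\<bar>)" by (simp add: sum_nonneg)
  ultimately show ?thesis unfolding Anorm_def by linarith
qed

lemma aff_lip:
  assumes "\<forall>j. \<bar>x' j - x j\<bar> \<le> \<tau>"
  shows "\<bar>aff m k W c x' i - aff m k W c x i\<bar> \<le> Anorm m k W c * \<tau>"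
proof (cases "i < k")
  case True
  have t: "\<tau> \<ge> 0" using assms by (meson abs_ge_zero order_trans)
  have "\<bar>aff m k W c x' i - aff m k W c x i\<bar> = \<bar>\<Sum>j<m. W i j * (x' j - x j)\<bar>"
    using True unfolding aff_def by (simp add: sum_subtractf right_diff_distrib)
  also have "\<dots> \<le> (\<Sum>j<m. \<bar>W i j * (x' j - x j)\<bar>)" by (rule sum_abs)
  also have "\<dots> \<le> (\<Sum>j<m. \<bar>W i j\<bar> * \<tau>)"
    using assms by (intro sum_mono) (simp add: abs_mult mult_left_mono)
  also have "\<dots> = (\<Sum>j<m. \<bar>W i j\<bar>) * \<tau>" by (simp add: sum_distrib_right)
  also have "\<dots> \<le> Anorm m k W c * \<tau>" using Anorm_row[OF True] t by (rule mult_right_mono)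
  finally show ?thesis .
next
  case False
  have t: "\<tau> \<ge> 0" using assms by (meson abs_ge_zero order_trans)
  then show ?thesis using False Anorm_ge1[of m k W c] unfolding aff_def by simp
qed

lemma aff_bnd:
  assumes "\<forall>j. \<bar>x j\<bar> \<le> B"
  shows "\<bar>aff m k W c x i\<bar> \<le> Anorm m k W c * (B + 1)"
proof (cases "i < k")
  case True
  have t: "B \<ge> 0" using assms by (meson abs_ge_zero order_trans)
  have "\<bar>aff m k W c x i\<bar> \<le> \<bar>\<Sum>j<m. W i j * x j\<bar> + \<bar>c i\<bar>"
    using True unfolding aff_def by simp
  also have "\<bar>\<Sum>j<m. W i j * x j\<bar> \<le> (\<Sum>j<m. \<bar>W i j * x j\<bar>)" by (rule sum_abs)
  also have "\<dots> \<le> (\<Sum>j<m. \<bar>W i j\<bar> * B)"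
    using assms by (intro sum_mono) (simp add: abs_mult mult_left_mono)
  also have "\<dots> = (\<Sum>j<m. \<bar>W i j\<bar>) * B" by (simp add: sum_distrib_right)
  also have "\<dots> \<le> Anorm m k W c * B" using Anorm_row[OF True] t by (rule mult_right_mono)
  finally show ?thesis using Anorm_c[OF True, of c m W] by (simp add: distrib_left)
next
  case False
  have t: "B \<ge> 0" using assms by (meson abs_ge_zero order_trans)
  then show ?thesis using False Anorm_ge1[of m k W c] unfolding aff_def by simp
qed


lemma approx:
  assumes cont: "continuous_on UNIV \<rho>"
  shows "length ps = length hs + 1 \<Longrightarrow> B \<ge> 0 \<Longrightarrow> \<exists>M>0. \<forall>e>0. \<exists>\<tau>>0. \<forall>\<sigma> x x'.
     (\<forall>t\<in>{-M..M}. \<bar>\<sigma> t - \<rho> t\<bar> \<le> \<tau>) \<longrightarrow> (\<forall>j. \<bar>x j\<bar> \<le> B) \<longrightarrow> (\<forall>j. \<bar>x' j - x j\<bar> \<le> \<tau>) \<longrightarrow>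
     (\<forall>i. \<bar>run \<sigma> (m # hs @ [n]) ps x' i - run \<rho> (m # hs @ [n]) ps x i\<bar> \<le> e)"
proof (induction hs arbitrary: m ps B)
  case Nil
  then obtain W c where ps: "ps = [(W,c)]" by (cases ps) (auto simp: length_Suc_conv)
  define A where "A = Anorm m n W c"
  have A: "A \<ge> 1" unfolding A_def by (rule Anorm_ge1)
  show ?case
  proof (rule exI[of _ 1], intro conjI allI impI)
    fix e :: real assume e: "e > 0"
    show "\<exists>\<tau>>0. \<forall>\<sigma> x x'.
     (\<forall>t\<in>{-1..1}. \<bar>\<sigma> t - \<rho> t\<bar> \<le> \<tau>) \<longrightarrow> (\<forall>j. \<bar>x j\<bar> \<le> B) \<longrightarrow> (\<forall>j. \<bar>x' j - x j\<bar> \<le> \<tau>) \<longrightarrow>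
     (\<forall>i. \<bar>run \<sigma> (m # [] @ [n]) ps x' i - run \<rho> (m # [] @ [n]) ps x i\<bar> \<le> e)"
    proof (intro exI[of _ "e / A"] conjI allI impI)
      show "e / A > 0" using e A by simp
            fix \<sigma> :: "real \<Rightarrow> real" and x x' :: "nat \<Rightarrow> real" and i :: nat
      assume "\<forall>t\<in>{-1..1}. \<bar>\<sigma> t - \<rho> t\<bar> \<le> e / A" "\<forall>j. \<bar>x j\<bar> \<le> B" and h: "\<forall>j. \<bar>x' j - x j\<bar> \<le> e / A"
      have "\<bar>aff m n W c x' i - aff m n W c x i\<bar> \<le> A * (e / A)"
        using aff_lip[OF h, of m n W c i] by (simp add: A_def)
      then show "\<bar>run \<sigma> (m # [] @ [n]) ps x' i - run \<rho> (m # [] @ [n]) ps x i\<bar> \<le> e"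
        using A ps by simp
    qed
  qed simp
next
  case (Cons h hs)
  then obtain W c ps' where ps: "ps = (W,c) # ps'" and lps: "length ps' = length hs + 1" by (cases ps) auto
  define A where "A = Anorm m h W c"
  have A: "A \<ge> 1" unfolding A_def by (rule Anorm_ge1)
  define M1 where "M1 = A * (B + 1) + 1"
  have M1: "M1 > 0" unfolding M1_def using A Cons.prems by (simp add: add_nonneg_pos)
  have "compact (\<rho> ` {-M1..M1})"
    by (rule compact_continuous_image) (use cont continuous_on_subset in auto)
  then obtain B2 where B2: "\<forall>t\<in>{-M1..M1}. \<bar>\<rho> t\<bar> \<le> B2"
    using compact_imp_bounded bounded_iff by (metis image_eqI real_norm_def)
  define B2' where "B2' = max B2 0"
  have B2': "B2' \<ge> 0" "\<forall>t\<in>{-M1..M1}. \<bar>\<rho> t\<bar> \<le> B2'" using B2 unfolding B2'_def by auto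
  obtain M2 where M2: "M2 > 0" and IH: "\<forall>e>0. \<exists>\<tau>>0. \<forall>\<sigma> x x'.
     (\<forall>t\<in>{-M2..M2}. \<bar>\<sigma> t - \<rho> t\<bar> \<le> \<tau>) \<longrightarrow> (\<forall>j. \<bar>x j\<bar> \<le> B2') \<longrightarrow> (\<forall>j. \<bar>x' j - x j\<bar> \<le> \<tau>) \<longrightarrow>
     (\<forall>i. \<bar>run \<sigma> (h # hs @ [n]) ps' x' i - run \<rho> (h # hs @ [n]) ps' x i\<bar> \<le> e)"
    using Cons.IH[OF lps B2'(1)] by blast
  have uc: "uniformly_continuous_on {-M1..M1} \<rho>"
    by (rule compact_uniformly_continuous) (use cont continuous_on_subset in auto)
  define M where "M = max M1 M2"
  show ?case
  proof (rule exI[of _ M], intro conjI allI impI)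
    show "M > 0" unfolding M_def using M1 by simp
    fix e :: real assume e: "e > 0"
    obtain \<tau>2 where t2: "\<tau>2 > 0" and IH2: "\<forall>\<sigma> x x'.
     (\<forall>t\<in>{-M2..M2}. \<bar>\<sigma> t - \<rho> t\<bar> \<le> \<tau>2) \<longrightarrow> (\<forall>j. \<bar>x j\<bar> \<le> B2') \<longrightarrow> (\<forall>j. \<bar>x' j - x j\<bar> \<le> \<tau>2) \<longrightarrow>
     (\<forall>i. \<bar>run \<sigma> (h # hs @ [n]) ps' x' i - run \<rho> (h # hs @ [n]) ps' x i\<bar> \<le> e)"
      using IH e by blast
    obtain dd where dd: "dd > 0" and ucd: "\<forall>s\<in>{-M1..M1}. \<forall>t\<in>{-M1..M1}. dist s t < dd \<longrightarrow> dist (\<rho> s) (\<rho> t) < \<tau>2 / 2"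
      using uc t2 unfolding uniformly_continuous_on_def by (metis half_gt_zero)
    define \<tau> where "\<tau> = min (\<tau>2/2) (min 1 (dd/2)) / A"
    have tpos: "\<tau> > 0" unfolding \<tau>_def using t2 dd A by simp
    have At: "A * \<tau> \<le> 1" "A * \<tau> \<le> dd/2" "A * \<tau> \<le> \<tau>2/2" unfolding \<tau>_def using A by auto
    have tt: "\<tau> \<le> \<tau>2/2"
    proof -
      have "\<tau> \<le> A * \<tau>" using A tpos by simp
      then show ?thesis using At by linarith
    qed
    show "\<exists>\<tau>>0. \<forall>\<sigma> x x'.
     (\<forall>t\<in>{-M..M}. \<bar>\<sigma> t - \<rho> t\<bar> \<le> \<tau>) \<longrightarrow> (\<forall>j. \<bar>x j\<bar> \<le> B) \<longrightarrow> (\<forall>j. \<bar>x' j - x j\<bar> \<le> \<tau>) \<longrightarrow>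
     (\<forall>i. \<bar>run \<sigma> (m # (h # hs) @ [n]) ps x' i - run \<rho> (m # (h # hs) @ [n]) ps x i\<bar> \<le> e)"
    proof (intro exI[of _ \<tau>] conjI allI impI)
      show "\<tau> > 0" by (rule tpos)
      fix \<sigma> :: "real \<Rightarrow> real" and x x' :: "nat \<Rightarrow> real" and i :: nat
      assume s: "\<forall>t\<in>{-M..M}. \<bar>\<sigma> t - \<rho> t\<bar> \<le> \<tau>" and xb: "\<forall>j. \<bar>x j\<bar> \<le> B"
        and xx: "\<forall>j. \<bar>x' j - x j\<bar> \<le> \<tau>"
      define z where "z = aff m h W c x"
      define z' where "z' = aff m h W c x'"
      have zb: "\<bar>z j\<bar> \<le> M1 - 1" for j unfolding z_def M1_def A_def using aff_bnd[OF xb] by simp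
      have zz: "\<bar>z' j - z j\<bar> \<le> A * \<tau>" for j unfolding z_def z'_def A_def using aff_lip[OF xx] by simp
      have z1: "z j \<in> {-M1..M1}" for j using zb[of j] by auto
      have z1': "z' j \<in> {-M1..M1}" for j using zb[of j] zz[of j] At by auto
      have ub: "\<forall>j. \<bar>act \<rho> h z j\<bar> \<le> B2'" using B2' z1 unfolding act_def by auto
      have uu: "\<forall>j. \<bar>act \<sigma> h z' j - act \<rho> h z j\<bar> \<le> \<tau>2"
      proof
        fix j
        show "\<bar>act \<sigma> h z' j - act \<rho> h z j\<bar> \<le> \<tau>2"
        proof (cases "j < h")
          case True
          have "z' j \<in> {-M..M}" using z1'[of j] unfolding M_def by auto
          then have 1: "\<bar>\<sigma> (z' j) - \<rho> (z' j)\<bar> \<le> \<tau>2/2" using s tt by fastforce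
          have "dist (z' j) (z j) < dd" using zz[of j] At dd by (simp add: dist_real_def)
          then have 2: "\<bar>\<rho> (z' j) - \<rho> (z j)\<bar> < \<tau>2/2" using ucd z1 z1' by (simp add: dist_real_def)
          have "\<bar>\<sigma> (z' j) - \<rho> (z j)\<bar> \<le> \<tau>2" using 1 2 by linarith
          then show ?thesis using True unfolding act_def by simp
        qed (use t2 in \<open>simp add: act_def\<close>)
      qed
      have ss: "\<forall>t\<in>{-M2..M2}. \<bar>\<sigma> t - \<rho> t\<bar> \<le> \<tau>2"
      proof
        fix t :: real assume "t \<in> {-M2..M2}"
        then have "t \<in> {-M..M}" unfolding M_def by auto
        then show "\<bar>\<sigma> t - \<rho> t\<bar> \<le> \<tau>2" using s tt t2 by fastforce
      qed
      have "\<bar>run \<sigma> (h # hs @ [n]) ps' (act \<sigma> h z') i - run \<rho> (h # hs @ [n]) ps' (act \<rho> h z) i\<bar> \<le> e"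
        using IH2 ss ub uu by blast
      then show "\<bar>run \<sigma> (m # (h # hs) @ [n]) ps x' i - run \<rho> (m # (h # hs) @ [n]) ps x i\<bar> \<le> e"
        using ps unfolding z_def z'_def by simp
    qed
  qed
qed


theorem lemma9:
  fixes \<rho> \<rho>t :: "real \<Rightarrow> real" and d N L Nt Lt :: nat and a b \<epsilon> :: real
    and f :: "(nat \<Rightarrow> real) \<Rightarrow> real"
  assumes "continuous_on UNIV \<rho>"
    and "d \<ge> 1" and "a < b" and "\<epsilon> > 0"
    and "\<exists>\<phi>. nn_fun \<rho> d N L \<phi> \<and> (\<forall>x\<in>cube d a b. \<bar>\<phi> x - f x\<bar> < \<epsilon> / 2)"
    and "\<forall>M>0. \<exists>r :: real \<Rightarrow> real \<Rightarrow> real.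
           (\<forall>\<delta>\<in>{0<..<1}. \<exists>g. nn_fun \<rho>t 1 Nt Lt g \<and> (\<forall>t. r \<delta> t = g (\<lambda>i. if i = 0 then t else 0)))
           \<and> uniform_limit {-M..M} r \<rho> (at_right 0)"
  shows "\<exists>\<phi>. nn_fun \<rho>t d (N * Nt) (L * Lt) \<phi> \<and> (\<forall>x\<in>cube d a b. \<bar>\<phi> x - f x\<bar> < \<epsilon>)"
proof -
  obtain \<phi> where phi: "nn_fun \<rho> d N L \<phi>" and phif: "\<forall>x\<in>cube d a b. \<bar>\<phi> x - f x\<bar> < \<epsilon> / 2"
    using assms(5) by blast
  obtain hs ps where hs: "length hs \<le> L" "\<forall>h\<in>set hs. h \<le> N" "length ps = length hs + 1"
    and phieq: "\<forall>x. \<phi> x = run \<rho> (d # hs @ [1]) ps x 0"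
    using phi unfolding nn_fun_def by blast
  define B where "B = \<bar>a\<bar> + \<bar>b\<bar>"
  have B0: "B \<ge> 0" unfolding B_def by simp
  have xB: "\<forall>j. \<bar>x j\<bar> \<le> B" if "x \<in> cube d a b" for x
  proof
    fix j
    show "\<bar>x j\<bar> \<le> B"
    proof (cases "j < d")
      case True
      then have "a \<le> x j" "x j \<le> b" using that unfolding cube_def by auto
      then show ?thesis unfolding B_def by linarith
    next
      case False
      then have "x j = 0" using that unfolding cube_def by auto
      then show ?thesis using B0 by simp
    qed
  qed
  obtain M where M: "M > 0" and Mp: "\<forall>e>0. \<exists>\<tau>>0. \<forall>\<sigma> x x'.
     (\<forall>t\<in>{-M..M}. \<bar>\<sigma> t - \<rho> t\<bar> \<le> \<tau>) \<longrightarrow> (\<forall>j. \<bar>x j\<bar> \<le> B) \<longrightarrow> (\<forall>j. \<bar>x' j - x j\<bar> \<le> \<tau>) \<longrightarrow>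
     (\<forall>i. \<bar>run \<sigma> (d # hs @ [1]) ps x' i - run \<rho> (d # hs @ [1]) ps x i\<bar> \<le> e)"
    using approx[OF assms(1) hs(3) B0] by blast
  obtain \<tau> where tau: "\<tau> > 0" and tp: "\<forall>\<sigma> x x'.
     (\<forall>t\<in>{-M..M}. \<bar>\<sigma> t - \<rho> t\<bar> \<le> \<tau>) \<longrightarrow> (\<forall>j. \<bar>x j\<bar> \<le> B) \<longrightarrow> (\<forall>j. \<bar>x' j - x j\<bar> \<le> \<tau>) \<longrightarrow>
     (\<forall>i. \<bar>run \<sigma> (d # hs @ [1]) ps x' i - run \<rho> (d # hs @ [1]) ps x i\<bar> \<le> \<epsilon>/4)"
    using Mp assms(4) by (metis divide_pos_pos zero_less_numeral)
  obtain r :: "real \<Rightarrow> real \<Rightarrow> real" where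
    rg: "\<forall>\<delta>\<in>{0<..<1}. \<exists>g. nn_fun \<rho>t 1 Nt Lt g \<and> (\<forall>t. r \<delta> t = g (\<lambda>i. if i = 0 then t else 0))"
    and ul: "uniform_limit {-M..M} r \<rho> (at_right 0)"
    using assms(6) M by blast
  have ev: "\<forall>\<^sub>F \<delta> in at_right 0. \<forall>t\<in>{-M..M}. dist (r \<delta> t) (\<rho> t) < \<tau>"
    using ul tau unfolding uniform_limit_iff by blast
  have "\<forall>\<^sub>F \<delta> in at_right 0. \<delta> \<in> {0<..<1} \<and> (\<forall>t\<in>{-M..M}. dist (r \<delta> t) (\<rho> t) < \<tau>)"
    using eventually_conj[OF eventually_at_right_real[of 0 1] ev] by simp
  then obtain \<delta> where del: "\<delta> \<in> {0<..<1}" and dclose: "\<forall>t\<in>{-M..M}. dist (r \<delta> t) (\<rho> t) < \<tau>"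
    using eventually_happens'[OF trivial_limit_at_right_real] by blast
  obtain g where g: "nn_fun \<rho>t 1 Nt Lt g" and geq: "\<forall>t. r \<delta> t = g (\<lambda>i. if i = 0 then t else 0)"
    using rg del by blast
  obtain gs qs where gs: "length gs \<le> Lt" "\<forall>h\<in>set gs. h \<le> Nt" "length qs = length gs + 1"
    and gq: "\<forall>x. g x = run \<rho>t (1 # gs @ [1]) qs x 0"
    using g unfolding nn_fun_def by blast
  define \<sigma> where "\<sigma> = r \<delta>"
  define Fg where "Fg = run \<rho>t (1 # gs @ [1]) qs"
  have netg: "net \<rho>t 1 1 Lt Nt Fg"
    unfolding Fg_def by (rule net_mono[OF net_run[OF gs(3) gs(2)]]) (use gs in auto)
  have sig: "\<sigma> t = Fg (\<lambda>i. if i = 0 then t else 0) 0" for t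
    unfolding \<sigma>_def Fg_def using geq gq by simp
  have netact: "net \<rho>t k k Lt (k*Nt) (act \<sigma> k)" for k
    using net_par[OF netg, of k] act_par[of \<sigma> Fg k, OF sig] by simp
  define F where "F = run \<sigma> (d # hs @ [1]) ps"
  have netF: "net \<sigma> d 1 L N F"
    unfolding F_def by (rule net_mono[OF net_run[OF hs(3) hs(2)]]) (use hs in auto)
  have netF': "net \<rho>t d 1 (L*Lt) (N*Nt) F"
    by (rule net_replace[OF netF netact])
  obtain hs' ps' where hs': "length hs' \<le> L*Lt" "\<forall>h\<in>set hs'. h \<le> N*Nt" "length ps' = length hs' + 1"
    "F = run \<rho>t (d # hs' @ [1]) ps'"
    using run_net[OF netF'] by blast
  have nnF: "nn_fun \<rho>t d (N * Nt) (L * Lt) (\<lambda>x. F x 0)"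
    unfolding nn_fun_def using hs' by auto
  have sclose: "\<forall>t\<in>{-M..M}. \<bar>\<sigma> t - \<rho> t\<bar> \<le> \<tau>"
    using dclose unfolding \<sigma>_def dist_real_def by fastforce
  show ?thesis
  proof (intro exI[of _ "\<lambda>x. F x 0"] conjI ballI)
    show "nn_fun \<rho>t d (N * Nt) (L * Lt) (\<lambda>x. F x 0)" by (rule nnF)
    fix x assume x: "x \<in> cube d a b"
    have "\<bar>F x 0 - \<phi> x\<bar> \<le> \<epsilon>/4"
      using tp sclose xB[OF x] tau phieq unfolding F_def by simp
    moreover have "\<bar>\<phi> x - f x\<bar> < \<epsilon> / 2" using phif x by blast
    ultimately show "\<bar>F x 0 - f x\<bar> < \<epsilon>" using assms(4) by linarith
  qed
qed

end
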